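(* For every $n\ge0$, the maps $\varphi_L,\varphi_R\colon\mathcal{T}_n\to\mathcal{P}_n(1212)$ are bijections.
   Context: $\mathcal{T}_n$ is the set of binary trees on $n$ vertices labeled $1,\dots,n$ by the search tree property (vertices in the left subtree of $i$ are smaller than $i$, those in the right subtree larger). A left branch is a maximal sequence of vertices $v,c_L(v),c_L^2(v),\dots$ connected by left-child edges; right branches analogously. For $T\in\mathcal{T}_n$, $\varphi_L(T)$ is the set partition of $[n]$ whose blocks are the vertex sets of the maximal left branches of $T$ (i.e. $i\sim_L j$ iff $i,j$ lie on the same left branch), and $\varphi_R(T)$ is the partition into vertex sets of maximal right branches. Set partitions of $[n]$ are identified with restricted growth strings (RGS) $x_1\cdots x_n$: order blocks by smallest element and let $x_i=j$ if $i$ is in the $j$-th block; $\mathcal{P}_n$ is the set of all RGS of length $n$. A string $x$ contains a pattern string $\tau=\tau_1\cdots\tau_m$ if there are indices $i_1<\dots<i_m$ with $x_{i_a}<x_{i_b}\iff\tau_a<\tau_b$ and $x_{i_a}=x_{i_b}\iff\tau_a=\tau_b$; $\mathcal{P}_n(1212)$ is the set of RGS avoiding $1212$ (the non-crossing set partitions). *)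

theory Defs
  imports Main "HOL-Library.Tree"
begin

definition trees :: "nat \<Rightarrow> nat tree set" where
  "trees n = {t. bst t \<and> set_tree t = {1..n}}"

fun left_edges :: "'a tree \<Rightarrow> ('a \<times> 'a) set" where
  "left_edges Leaf = {}"
| "left_edges (Node l a r) =
     (case l of Leaf \<Rightarrow> {} | Node _ b _ \<Rightarrow> {(a, b)}) \<union> left_edges l \<union> left_edges r"

fun right_edges :: "'a tree \<Rightarrow> ('a \<times> 'a) set" where
  "right_edges Leaf = {}"
| "right_edges (Node l a r) =
     (case r of Leaf \<Rightarrow> {} | Node _ b _ \<Rightarrow> {(a, b)}) \<union> right_edges l \<union> right_edges r"

definition same_branch :: "('a \<times> 'a) set \<Rightarrow> 'a \<Rightarrow> 'a \<Rightarrow> bool" where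
  "same_branch E i j \<longleftrightarrow> (i, j) \<in> (E \<union> E\<inverse>)\<^sup>*"

text \<open>Restricted growth string (1-based values, list position k stands for element k+1)
  of a partition of {1..n} given by an equivalence predicate R: blocks are ordered by
  their smallest element, x_i = j iff i lies in the j-th block.\<close>
definition block :: "nat \<Rightarrow> (nat \<Rightarrow> nat \<Rightarrow> bool) \<Rightarrow> nat \<Rightarrow> nat set" where
  "block n R i = {j \<in> {1..n}. R i j}"

definition rgs_of :: "nat \<Rightarrow> (nat \<Rightarrow> nat \<Rightarrow> bool) \<Rightarrow> nat list" where
  "rgs_of n R = map (\<lambda>i. card {m. m \<in> Min ` (block n R ` {1..n}) \<and> m \<le> Min (block n R i)})
                  [1..<n+1]"

definition phiL :: "nat \<Rightarrow> nat tree \<Rightarrow> nat list" where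
  "phiL n t = rgs_of n (same_branch (left_edges t))"

definition phiR :: "nat \<Rightarrow> nat tree \<Rightarrow> nat list" where
  "phiR n t = rgs_of n (same_branch (right_edges t))"

definition is_rgs :: "nat list \<Rightarrow> bool" where
  "is_rgs x \<longleftrightarrow> (\<forall>i < length x. 1 \<le> x ! i \<and> x ! i \<le> Suc (Max (insert 0 (set (take i x)))))"

definition RGS :: "nat \<Rightarrow> nat list set" where
  "RGS n = {x. length x = n \<and> is_rgs x}"

definition contains :: "nat list \<Rightarrow> nat list \<Rightarrow> bool" where
  "contains x \<tau> \<longleftrightarrow> (\<exists>f :: nat \<Rightarrow> nat.
      (\<forall>a b. a < b \<and> b < length \<tau> \<longrightarrow> f a < f b) \<and>
      (\<forall>a < length \<tau>. f a < length x) \<and>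
      (\<forall>a < length \<tau>. \<forall>b < length \<tau>.
          (x ! f a < x ! f b \<longleftrightarrow> \<tau> ! a < \<tau> ! b) \<and> (x ! f a = x ! f b \<longleftrightarrow> \<tau> ! a = \<tau> ! b)))"

definition RGS_avoid :: "nat \<Rightarrow> nat list \<Rightarrow> nat list set" where
  "RGS_avoid n \<tau> = {x \<in> RGS n. \<not> contains x \<tau>}"

end

theory Submission
  imports Defs
begin


fun spine :: "nat tree \<Rightarrow> nat set" where
  "spine Leaf = {}" | "spine (Node l a r) = insert a (spine l)"

fun blk :: "nat tree \<Rightarrow> (nat \<times> nat) set" where
  "blk Leaf = {}"
| "blk (Node l a r) = blk l \<union> blk r \<union> (insert a (spine l) \<times> insert a (spine l))"

definition nc :: "(nat \<times> nat) set \<Rightarrow> bool" where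
  "nc R \<longleftrightarrow> (\<forall>a b c d. a<b \<longrightarrow> b<c \<longrightarrow> c<d \<longrightarrow> (a,c)\<in>R \<longrightarrow> (b,d)\<in>R \<longrightarrow> (a,b)\<in>R)"

definition NC :: "nat set \<Rightarrow> (nat \<times> nat) set set" where
  "NC S = {R. equiv S R \<and> nc R}"

lemma spine_sub: "spine t \<subseteq> set_tree t"
  by (induction t) auto

lemma blk_sub: "blk t \<subseteq> set_tree t \<times> set_tree t"
  using spine_sub by (induction t) fastforce+

lemma spine_min: "bst t \<Longrightarrow> t \<noteq> Leaf \<Longrightarrow> Min (set_tree t) \<in> spine t"
proof (induction t)
  case Leaf then show ?case by simp
next
  case (Node l a r)
  show ?case
  proof (cases "l = Leaf")
    case True
    have "Min (set_tree (Node l a r)) = a"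
      using Node.prems True by (intro Min_eqI) (auto simp: order_less_imp_le)
    then show ?thesis by simp
  next
    case False
    have m: "Min (set_tree l) \<in> set_tree l" using False
      by (simp add: Min_in)
    have mr: "\<forall>y\<in>set_tree r. Min (set_tree l) < y" using m Node.prems by (meson less_trans bst_wrt.simps(2))
    have "Min (set_tree (Node l a r)) = Min (set_tree l)"
      using Node.prems False m mr by (intro Min_eqI) (auto simp: order_less_imp_le)
    then show ?thesis using Node False by simp
  qed
qed

lemma spine_le_root: "bst (Node l a r) \<Longrightarrow> x \<in> spine (Node l a r) \<Longrightarrow> x \<le> a"
  using spine_sub[of l] by fastforce

lemma spine_closed: "bst t \<Longrightarrow> (x,y) \<in> blk t \<Longrightarrow> (y \<in> spine t \<longleftrightarrow> x \<in> spine t)"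
proof (induction t arbitrary: x y)
  case Leaf then show ?case by simp
next
  case (Node l a r)
  have dl: "a \<notin> set_tree l" "a \<notin> set_tree r" using Node.prems(1) by auto
  have dr: "spine l \<inter> set_tree r = {}" using Node.prems(1) spine_sub[of l] by fastforce
  show ?case
  proof -
    consider "(x,y) \<in> blk l" | "(x,y) \<in> blk r" | "x \<in> insert a (spine l)" "y \<in> insert a (spine l)"
      using Node.prems(2) by auto
    then show ?thesis
    proof cases
      case 1
      then show ?thesis using Node.IH(1)[of x y] Node.prems(1) blk_sub[of l] dl by auto
    next
      case 2
      then show ?thesis using blk_sub[of r] dl dr by auto
    qed auto
  qed
qed

lemma blk_refl: "x \<in> set_tree t \<Longrightarrow> (x,x) \<in> blk t"
  by (induction t) auto

lemma blk_sym: "(x,y) \<in> blk t \<Longrightarrow> (y,x) \<in> blk t"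
  by (induction t) auto

lemma blk_trans: "bst t \<Longrightarrow> (x,y) \<in> blk t \<Longrightarrow> (y,z) \<in> blk t \<Longrightarrow> (x,z) \<in> blk t"
proof (induction t arbitrary: x y z)
  case Leaf then show ?case by simp
next
  case (Node l a r)
  let ?K = "insert a (spine l)"
  have dl: "a \<notin> set_tree l" "a \<notin> set_tree r" using Node.prems(1) by auto
  have dlr: "set_tree l \<inter> set_tree r = {}" using Node.prems(1) by fastforce
  have dr: "?K \<inter> set_tree r = {}" using Node.prems(1) spine_sub[of l] by fastforce
  have bl: "blk l \<subseteq> set_tree l \<times> set_tree l" and br: "blk r \<subseteq> set_tree r \<times> set_tree r"
    by (rule blk_sub)+
  have sc: "\<And>u v. (u,v) \<in> blk l \<Longrightarrow> (v \<in> spine l \<longleftrightarrow> u \<in> spine l)"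
    using spine_closed Node.prems(1) by auto
  consider "(x,y) \<in> blk l" | "(x,y) \<in> blk r" | "x \<in> ?K" "y \<in> ?K"
    using Node.prems(2) by auto
  then show ?case
  proof cases
    case 1
    consider "(y,z) \<in> blk l" | "(y,z) \<in> blk r" | "y \<in> ?K" "z \<in> ?K"
      using Node.prems(3) by auto
    then show ?thesis
    proof cases
      case 1
      then show ?thesis using \<open>(x,y) \<in> blk l\<close> Node.IH(1) Node.prems(1) by auto
    next
      case 2
      then show ?thesis using \<open>(x,y) \<in> blk l\<close> bl br dlr by auto
    next
      case 3
      then have "y \<in> spine l" using \<open>(x,y) \<in> blk l\<close> bl dl by auto
      then have "x \<in> spine l" using sc \<open>(x,y) \<in> blk l\<close> by auto
      then show ?thesis using 3 by auto
    qed
  next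
    case 2
    consider "(y,z) \<in> blk l" | "(y,z) \<in> blk r" | "y \<in> ?K" "z \<in> ?K"
      using Node.prems(3) by auto
    then show ?thesis
    proof cases
      case 1
      then show ?thesis using \<open>(x,y) \<in> blk r\<close> bl br dlr by auto
    next
      case 2
      then show ?thesis using \<open>(x,y) \<in> blk r\<close> Node.IH(2) Node.prems(1) by auto
    next
      case 3
      then show ?thesis using \<open>(x,y) \<in> blk r\<close> br dr by auto
    qed
  next
    case 3
    consider "(y,z) \<in> blk l" | "(y,z) \<in> blk r" | "y \<in> ?K" "z \<in> ?K"
      using Node.prems(3) by auto
    then show ?thesis
    proof cases
      case 1
      then have "y \<in> spine l" using 3 bl dl by auto
      then have "z \<in> spine l" using sc blk_sym \<open>(y,z) \<in> blk l\<close> by blast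
      then show ?thesis using 3 by auto
    next
      case 2
      then show ?thesis using 3 br dr by auto
    next
      case 3
      then show ?thesis using \<open>x \<in> ?K\<close> by auto
    qed
  qed
qed

lemma blk_equiv: "bst t \<Longrightarrow> equiv (set_tree t) (blk t)"
  unfolding equiv_def refl_on_def sym_def trans_def
  using blk_sub blk_refl blk_sym blk_trans by blast

lemma blk_nc: "bst t \<Longrightarrow> nc (blk t)"
proof (induction t)
  case Leaf then show ?case by (simp add: nc_def)
next
  case (Node l v r)
  let ?K = "insert v (spine l)"
  let ?t = "\<langle>l,v,r\<rangle>"
  have bl: "blk l \<subseteq> set_tree l \<times> set_tree l" and br: "blk r \<subseteq> set_tree r \<times> set_tree r"
    and bt: "blk ?t \<subseteq> set_tree ?t \<times> set_tree ?t"
    by (rule blk_sub)+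
  have sl: "spine l \<subseteq> set_tree l" by (rule spine_sub)
  have lt: "\<forall>x\<in>set_tree l. x < v" "\<forall>x\<in>set_tree r. v < x" using Node.prems by auto
  have L: "\<And>x. x \<in> set_tree ?t \<Longrightarrow> x < v \<Longrightarrow> x \<in> set_tree l" using lt by auto
  have R: "\<And>x. x \<in> set_tree ?t \<Longrightarrow> v < x \<Longrightarrow> x \<in> set_tree r" using lt by auto
  have ncl: "nc (blk l)" "nc (blk r)" using Node by auto
  have sc: "\<And>u w. (u,w) \<in> blk l \<Longrightarrow> (w \<in> spine l \<longleftrightarrow> u \<in> spine l)"
    using spine_closed Node.prems(1) by auto
  have sp: "spine l \<times> spine l \<subseteq> blk l" by (cases l) auto
  show ?case unfolding nc_def
  proof (intro allI impI)
    fix a b c d assume o: "a < b" "b < c" "c < d" and ac: "(a,c) \<in> blk ?t"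
      and bd: "(b,d) \<in> blk ?t"
    have inS: "a \<in> set_tree ?t" "b \<in> set_tree ?t" "c \<in> set_tree ?t" "d \<in> set_tree ?t"
      using ac bd bt by blast+
    consider "(a,c) \<in> blk l" | "(a,c) \<in> blk r" | "a \<in> ?K" "c \<in> ?K"
      using ac by auto
    then show "(a,b) \<in> blk ?t"
    proof cases
      case 1
      have "c \<in> set_tree l" using 1 bl by blast
      then have "c < v" using lt by blast
      then have bsl: "b \<in> set_tree l" using L[OF inS(2)] o by simp
      consider "(b,d) \<in> blk l" | "(b,d) \<in> blk r" | "b \<in> ?K" "d \<in> ?K"
        using bd by auto
      then show ?thesis
      proof cases
        case 1
        then have "(a,b) \<in> blk l" using \<open>(a,c) \<in> blk l\<close> ncl o unfolding nc_def by blast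
        then show ?thesis by simp
      next
        case 2 then have "b \<in> set_tree r" using br by blast
        then show ?thesis using bsl lt by fastforce
      next
        case 3
        have "b \<noteq> v" using bsl lt by blast
        then have bs: "b \<in> spine l" using 3 by simp
        show ?thesis
        proof (cases "d = v")
          case False
          then have "d \<in> spine l" using 3 by simp
          then have "(b,d) \<in> blk l" using bs sp by blast
          then have "(a,b) \<in> blk l" using \<open>(a,c) \<in> blk l\<close> ncl o unfolding nc_def by blast
          then show ?thesis by simp
        next
          case True
          have lnl: "l \<noteq> Leaf" using bsl by auto
          define m where "m = Min (set_tree l)"
          have ms: "m \<in> spine l" using spine_min[OF _ lnl] Node.prems unfolding m_def by auto
          have asl: "a \<in> set_tree l" using \<open>(a,c) \<in> blk l\<close> bl by blast
          have "m \<le> a" unfolding m_def using asl by simp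
          have mb: "(m,b) \<in> blk l" using ms bs sp by blast
          have "a \<in> spine l"
          proof (cases "m = a")
            case True then show ?thesis using ms by simp
          next
            case False
            then have "m < a" using \<open>m \<le> a\<close> by simp
            then have "(m,a) \<in> blk l" using ncl mb \<open>(a,c) \<in> blk l\<close> o unfolding nc_def by blast
            then show ?thesis using sc ms by blast
          qed
          then show ?thesis using bs by simp
        qed
      qed
    next
      case 2
      then have "a \<in> set_tree r" using br by blast
      then have "v < a" using lt by blast
      then have "b \<in> set_tree r" "d \<in> set_tree r" using R[OF inS(2)] R[OF inS(4)] o by simp_all
      then have "b \<notin> ?K" using lt sl by fastforce
      then have "(b,d) \<in> blk r" using bd \<open>b \<in> set_tree r\<close> bl lt by fastforce
      then have "(a,b) \<in> blk r" using 2 ncl o unfolding nc_def by blast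
      then show ?thesis by simp
    next
      case 3
      have "c \<le> v" using 3 lt sl by fastforce
      then have bsl: "b \<in> set_tree l" using L[OF inS(2)] o by simp
      have as: "a \<in> spine l" using 3 o \<open>c \<le> v\<close> by auto
      consider "(b,d) \<in> blk l" | "(b,d) \<in> blk r" | "b \<in> ?K" "d \<in> ?K"
        using bd by auto
      then show ?thesis
      proof cases
        case 1
        have "d \<in> set_tree l" using 1 bl by blast
        then have "c \<noteq> v" using o lt by fastforce
        then have "c \<in> spine l" using 3 by simp
        then have "(a,c) \<in> blk l" using as sp by blast
        then have "(a,b) \<in> blk l" using 1 ncl o unfolding nc_def by blast
        then show ?thesis by simp
      next
        case 2 then have "b \<in> set_tree r" using br by blast
        then show ?thesis using bsl lt by fastforce
      next
        case 3
        then have "(a,b) \<in> ?K \<times> ?K" using \<open>a \<in> ?K\<close> by blast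
        then show ?thesis by (simp only: blk.simps) blast
      qed
    qed
  qed
qed

lemma blk_min_block: "bst t \<Longrightarrow> t \<noteq> Leaf \<Longrightarrow> {x. (Min (set_tree t), x) \<in> blk t} = spine t"
proof -
  assume b: "bst t" and n: "t \<noteq> Leaf"
  have ms: "Min (set_tree t) \<in> spine t" using spine_min b n by auto
  have "spine t \<times> spine t \<subseteq> blk t" using n by (cases t) auto
  then show ?thesis using ms spine_closed[OF b] by blast
qed

lemma root_max_spine: "bst \<langle>l,a,r\<rangle> \<Longrightarrow> Max (spine \<langle>l,a,r\<rangle>) = a"
proof -
  assume b: "bst \<langle>l,a,r\<rangle>"
  have "finite (spine \<langle>l,a,r\<rangle>)" using spine_sub finite_subset finite_set_tree by metis
  then show ?thesis using spine_le_root[OF b] by (intro Max_eqI) auto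
qed

lemma blk_restr_l: "bst \<langle>l,a,r\<rangle> \<Longrightarrow> blk \<langle>l,a,r\<rangle> \<inter> (set_tree l \<times> set_tree l) = blk l"
proof -
  assume b: "bst \<langle>l,a,r\<rangle>"
  have "spine l \<times> spine l \<subseteq> blk l" by (cases l) auto
  moreover have "a \<notin> set_tree l" using b by auto
  moreover have "set_tree l \<inter> set_tree r = {}" using b by fastforce
  ultimately show ?thesis using blk_sub[of l] blk_sub[of r] by auto
qed

lemma blk_restr_r: "bst \<langle>l,a,r\<rangle> \<Longrightarrow> blk \<langle>l,a,r\<rangle> \<inter> (set_tree r \<times> set_tree r) = blk r"
proof -
  assume b: "bst \<langle>l,a,r\<rangle>"
  have "insert a (spine l) \<inter> set_tree r = {}" using b spine_sub[of l] by fastforce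
  moreover have "set_tree l \<inter> set_tree r = {}" using b by fastforce
  ultimately show ?thesis using blk_sub[of l] blk_sub[of r] by auto
qed

lemma set_l: "bst \<langle>l,a,r\<rangle> \<Longrightarrow> set_tree l = {x \<in> set_tree \<langle>l,a,r\<rangle>. (x::nat) < a}"
  by auto
lemma set_r: "bst \<langle>l,a,r\<rangle> \<Longrightarrow> set_tree r = {x \<in> set_tree \<langle>l,a,r\<rangle>. a < (x::nat)}"
  by auto

lemma blk_inj: "bst t1 \<Longrightarrow> bst t2 \<Longrightarrow> set_tree t1 = set_tree t2 \<Longrightarrow> blk t1 = blk t2 \<Longrightarrow> t1 = t2"
proof (induction t1 arbitrary: t2)
  case Leaf then show ?case by simp
next
  case (Node l a r)
  obtain l' a' r' where t2: "t2 = \<langle>l',a',r'\<rangle>" using Node.prems(3) by (cases t2) auto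
  have b2: "bst \<langle>l',a',r'\<rangle>" using Node.prems(2) t2 by simp
  have "spine \<langle>l,a,r\<rangle> = {x. (Min (set_tree \<langle>l,a,r\<rangle>), x) \<in> blk \<langle>l,a,r\<rangle>}"
    using blk_min_block[OF Node.prems(1)] by blast
  also have "\<dots> = {x. (Min (set_tree t2), x) \<in> blk t2}" by (simp only: Node.prems(3,4))
  also have "\<dots> = spine t2" using blk_min_block[OF Node.prems(2)] t2 by blast
  finally have "spine \<langle>l,a,r\<rangle> = spine \<langle>l',a',r'\<rangle>" using t2 by blast
  then have aa: "a = a'" using root_max_spine[OF Node.prems(1)] root_max_spine[OF b2] by simp
  have bl: "bst l" "bst r" "bst l'" "bst r'" using Node.prems(1) b2 by auto
  have st: "set_tree \<langle>l,a,r\<rangle> = set_tree \<langle>l',a',r'\<rangle>" using Node.prems(3) t2 by (simp only:)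
  have sl: "set_tree l = {x \<in> set_tree \<langle>l,a,r\<rangle>. x < a}" 
    "set_tree r = {x \<in> set_tree \<langle>l,a,r\<rangle>. a < x}" using set_l set_r Node.prems(1) by blast+
  have sl': "set_tree l' = {x \<in> set_tree \<langle>l',a',r'\<rangle>. x < a'}"
    "set_tree r' = {x \<in> set_tree \<langle>l',a',r'\<rangle>. a' < x}" using set_l set_r b2 by blast+
  have el: "set_tree l = set_tree l'" "set_tree r = set_tree r'"
    using sl sl' aa st by metis+
  have bb: "blk \<langle>l,a,r\<rangle> = blk \<langle>l',a',r'\<rangle>" using Node.prems(4) t2 by (simp only:)
  have "blk l = blk \<langle>l,a,r\<rangle> \<inter> (set_tree l \<times> set_tree l)" using blk_restr_l[OF Node.prems(1)] by (rule sym)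
  also have "\<dots> = blk \<langle>l',a',r'\<rangle> \<inter> (set_tree l' \<times> set_tree l')" using bb el by (simp only:)
  also have "\<dots> = blk l'" by (rule blk_restr_l[OF b2])
  finally have "blk l = blk l'" .
  then have ll: "l = l'" using Node.IH(1)[OF bl(1) bl(3) el(1)] by simp
  have "blk r = blk \<langle>l,a,r\<rangle> \<inter> (set_tree r \<times> set_tree r)" using blk_restr_r[OF Node.prems(1)] by (rule sym)
  also have "\<dots> = blk \<langle>l',a',r'\<rangle> \<inter> (set_tree r' \<times> set_tree r')" using bb el by (simp only:)
  also have "\<dots> = blk r'" by (rule blk_restr_r[OF b2])
  finally have "blk r = blk r'" .
  then have rr: "r = r'" using Node.IH(2)[OF bl(2) bl(4) el(2)] by simp
  show ?case using aa t2 ll rr by simp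
qed

lemma NC_restrict: "R \<in> NC S \<Longrightarrow> T \<subseteq> S \<Longrightarrow> R \<inter> (T \<times> T) \<in> NC T"
proof -
  assume a: "R \<in> NC S" "T \<subseteq> S"
  have e: "equiv S R" "nc R" using a(1) unfolding NC_def by auto
  have "equiv T (R \<inter> (T \<times> T))"
  proof (rule equivI)
    show "R \<inter> T \<times> T \<subseteq> T \<times> T" by blast
    show "refl_on T (R \<inter> T \<times> T)" using e(1) a(2) unfolding equiv_def refl_on_def by blast
    show "sym (R \<inter> T \<times> T)" using e(1) unfolding equiv_def sym_def by blast
    show "trans (R \<inter> T \<times> T)"
      using e(1) unfolding equiv_def trans_def by blast
  qed
  moreover have "nc (R \<inter> (T \<times> T))" unfolding nc_def
  proof (intro allI impI)
    fix p q u w assume "p < q" "q < u" "u < w" "(p, u) \<in> R \<inter> T \<times> T" "(q, w) \<in> R \<inter> T \<times> T"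
    then show "(p, q) \<in> R \<inter> T \<times> T" using e(2) unfolding nc_def by blast
  qed
  ultimately show ?thesis unfolding NC_def by simp
qed

lemma blk_surj: "finite S \<Longrightarrow> R \<in> NC S \<Longrightarrow> \<exists>t. bst t \<and> set_tree t = S \<and> blk t = R"
proof (induction "card S" arbitrary: S R rule: less_induct)
  case less
  have eq: "equiv S R" and ncR: "nc R" using less.prems unfolding NC_def by auto
  have RS: "R \<subseteq> S \<times> S" using eq unfolding equiv_def refl_on_def by auto
  show ?case
  proof (cases "S = {}")
    case True
    then show ?thesis using RS by (intro exI[of _ Leaf]) auto
  next
    case False
    define m where "m = Min S"
    have mS: "m \<in> S" using False less.prems(1) unfolding m_def by simp
    have mle: "\<And>x. x \<in> S \<Longrightarrow> m \<le> x" using less.prems(1) unfolding m_def by simp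
    define B where "B = {x. (m,x) \<in> R}"
    have BS: "B \<subseteq> S" using RS unfolding B_def by auto
    have mB: "m \<in> B" using eq mS unfolding B_def equiv_def refl_on_def by auto
    have fB: "finite B" using BS less.prems(1) finite_subset by auto
    define v where "v = Max B"
    have vB: "v \<in> B" using fB mB unfolding v_def by (intro Max_in) auto
    have leV: "\<And>x. x \<in> B \<Longrightarrow> x \<le> v" using fB unfolding v_def by simp
    have vS: "v \<in> S" using vB BS by auto
    define S1 where "S1 = {x \<in> S. x < v}"
    define S2 where "S2 = {x \<in> S. v < x}"
    have cS1: "card S1 < card S" unfolding S1_def
      by (rule psubset_card_mono) (use less.prems(1) vS in auto)
    have cS2: "card S2 < card S" unfolding S2_def
      by (rule psubset_card_mono) (use less.prems(1) vS in auto)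
    have f12: "finite S1" "finite S2" using less.prems(1) unfolding S1_def S2_def by auto
    obtain l where l: "bst l" "set_tree l = S1" "blk l = R \<inter> (S1 \<times> S1)"
      using less.hyps[OF cS1 f12(1), of "R \<inter> (S1 \<times> S1)"] NC_restrict[OF less.prems(2)]
      unfolding S1_def by auto
    obtain r where r: "bst r" "set_tree r = S2" "blk r = R \<inter> (S2 \<times> S2)"
      using less.hyps[OF cS2 f12(2), of "R \<inter> (S2 \<times> S2)"] NC_restrict[OF less.prems(2)]
      unfolding S2_def by auto
    let ?t = "\<langle>l,v,r\<rangle>"
    have bt: "bst ?t" using l r unfolding S1_def S2_def by auto
    have st: "set_tree ?t = S" using l r vS unfolding S1_def S2_def by auto
    have K: "insert v (spine l) = B"
    proof (cases "l = Leaf")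
      case True
      then have "S1 = {}" using l by auto
      then have "m = v" using mS mle vB BS unfolding S1_def
        by (metis (mono_tags, lifting) empty_iff le_neq_implies_less mem_Collect_eq subsetD)
      then have "\<forall>x\<in>B. x = v" using leV mle BS by (meson antisym subsetD)
      then have "B = {v}" using vB by blast
      then show ?thesis using True by simp
    next
      case False
      obtain x where "x \<in> S1" using False l by fastforce
      then have mv: "m < v" using mle unfolding S1_def by fastforce
      have "Min S1 = m" using f12 mle mS mv unfolding S1_def by (intro Min_eqI) auto
      then have "spine l = {x. (m, x) \<in> R \<inter> (S1 \<times> S1)}"
        using blk_min_block[OF l(1) False] l by simp
      also have "\<dots> = B - {v}"
      proof
        show "{x. (m, x) \<in> R \<inter> (S1 \<times> S1)} \<subseteq> B - {v}" unfolding B_def S1_def by auto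
        show "B - {v} \<subseteq> {x. (m, x) \<in> R \<inter> (S1 \<times> S1)}"
        proof
          fix x assume x: "x \<in> B - {v}"
          then have "x < v" using leV le_neq_implies_less by blast
          then show "x \<in> {x. (m, x) \<in> R \<inter> (S1 \<times> S1)}" using x BS mS mv unfolding B_def S1_def by auto
        qed
      qed
      finally show ?thesis using vB by auto
    qed
    have "R = R \<inter> (S1 \<times> S1) \<union> R \<inter> (S2 \<times> S2) \<union> B \<times> B"
    proof
      show "R \<subseteq> R \<inter> (S1 \<times> S1) \<union> R \<inter> (S2 \<times> S2) \<union> B \<times> B"
      proof
        fix p assume pR: "p \<in> R"
        obtain x y where p: "p = (x,y)" by (cases p)
        have xy: "x \<in> S" "y \<in> S" using pR p RS by auto
        show "p \<in> R \<inter> (S1 \<times> S1) \<union> R \<inter> (S2 \<times> S2) \<union> B \<times> B"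
        proof (cases "x \<in> B")
          case True
          then have "y \<in> B" using pR p eq unfolding B_def equiv_def trans_def by blast
          then show ?thesis using True p by auto
        next
          case False
          have yB: "y \<notin> B" using False pR p eq unfolding B_def equiv_def trans_def sym_def by blast
          have mv: "(m,v) \<in> R" using vB unfolding B_def by simp
          have xm: "m < x" "m < y" using False yB mB mle xy le_neq_implies_less by metis+
          have "x \<noteq> v" "y \<noteq> v" using False yB vB by auto
          moreover have "\<not> (x < v \<and> v < y)"
          proof
            assume "x < v \<and> v < y"
            then have "(m,x) \<in> R" using ncR mv pR p xm unfolding nc_def by blast
            then show False using False unfolding B_def by simp
          qed
          moreover have "\<not> (y < v \<and> v < x)"
          proof
            assume "y < v \<and> v < x"
            moreover have "(y,x) \<in> R" using pR p eq unfolding equiv_def sym_def by blast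
            ultimately have "(m,y) \<in> R" using ncR mv xm unfolding nc_def by blast
            then show False using yB unfolding B_def by simp
          qed
          ultimately show ?thesis using pR p xy unfolding S1_def S2_def by auto
        qed
      qed
    next
      show "R \<inter> (S1 \<times> S1) \<union> R \<inter> (S2 \<times> S2) \<union> B \<times> B \<subseteq> R"
        using mB eq unfolding B_def equiv_def trans_def sym_def by blast
    qed
    then have "blk ?t = R" using l r K by simp
    then show ?thesis using bt st by blast
  qed
qed

lemma thmA: "finite S \<Longrightarrow> bij_betw blk {t. bst t \<and> set_tree t = S} (NC S)"
  unfolding bij_betw_def inj_on_def
proof (intro conjI ballI impI)
  fix t1 t2 assume "t1 \<in> {t. bst t \<and> set_tree t = S}" "t2 \<in> {t. bst t \<and> set_tree t = S}"
    "blk t1 = blk t2"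
  then show "t1 = t2" using blk_inj by auto
next
  assume f: "finite S"
  show "blk ` {t. bst t \<and> set_tree t = S} = NC S"
  proof
    show "blk ` {t. bst t \<and> set_tree t = S} \<subseteq> NC S"
      using blk_equiv blk_nc unfolding NC_def by auto
    show "NC S \<subseteq> blk ` {t. bst t \<and> set_tree t = S}"
      using blk_surj[OF f] by blast
  qed
qed



fun spineR :: "nat tree \<Rightarrow> nat set" where
  "spineR Leaf = {}" | "spineR (Node l a r) = insert a (spineR r)"

fun blkR :: "nat tree \<Rightarrow> (nat \<times> nat) set" where
  "blkR Leaf = {}"
| "blkR (Node l a r) = blkR l \<union> blkR r \<union> (insert a (spineR r) \<times> insert a (spineR r))"

lemma spineR_sub: "spineR t \<subseteq> set_tree t"
  by (induction t) auto

lemma blkR_sub: "blkR t \<subseteq> set_tree t \<times> set_tree t"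
  using spineR_sub by (induction t) fastforce+

lemma spineR_max: "bst t \<Longrightarrow> t \<noteq> Leaf \<Longrightarrow> Max (set_tree t) \<in> spineR t"
proof (induction t)
  case Leaf then show ?case by simp
next
  case (Node l a r)
  show ?case
  proof (cases "r = Leaf")
    case True
    have "Max (set_tree (Node l a r)) = a"
      using Node.prems True by (intro Max_eqI) (auto simp: order_less_imp_le)
    then show ?thesis by simp
  next
    case False
    have m: "Max (set_tree r) \<in> set_tree r" using False
      by (simp add: Max_in)
    have mr: "\<forall>y\<in>set_tree l. y < Max (set_tree r)" using m Node.prems by (meson less_trans bst_wrt.simps(2))
    have "Max (set_tree (Node l a r)) = Max (set_tree r)"
      using Node.prems False m mr by (intro Max_eqI) (auto simp: order_less_imp_le)
    then show ?thesis using Node False by simp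
  qed
qed

lemma spineR_ge_root: "bst (Node l a r) \<Longrightarrow> x \<in> spineR (Node l a r) \<Longrightarrow> a \<le> x"
  using spineR_sub[of r] by fastforce

lemma spineR_closed: "bst t \<Longrightarrow> (x,y) \<in> blkR t \<Longrightarrow> (y \<in> spineR t \<longleftrightarrow> x \<in> spineR t)"
proof (induction t arbitrary: x y)
  case Leaf then show ?case by simp
next
  case (Node l a r)
  have dl: "a \<notin> set_tree l" "a \<notin> set_tree r" using Node.prems(1) by auto
  have dr: "spineR r \<inter> set_tree l = {}" using Node.prems(1) spineR_sub[of r] by fastforce
  show ?case
  proof -
    consider "(x,y) \<in> blkR r" | "(x,y) \<in> blkR l" | "x \<in> insert a (spineR r)" "y \<in> insert a (spineR r)"
      using Node.prems(2) by auto
    then show ?thesis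
    proof cases
      case 1
      then show ?thesis using Node.IH(2)[of x y] Node.prems(1) blkR_sub[of r] dl by auto
    next
      case 2
      then show ?thesis using blkR_sub[of l] dl dr by auto
    qed auto
  qed
qed

lemma blkR_refl: "x \<in> set_tree t \<Longrightarrow> (x,x) \<in> blkR t"
  by (induction t) auto

lemma blkR_sym: "(x,y) \<in> blkR t \<Longrightarrow> (y,x) \<in> blkR t"
  by (induction t) auto

lemma blkR_trans: "bst t \<Longrightarrow> (x,y) \<in> blkR t \<Longrightarrow> (y,z) \<in> blkR t \<Longrightarrow> (x,z) \<in> blkR t"
proof (induction t arbitrary: x y z)
  case Leaf then show ?case by simp
next
  case (Node l a r)
  let ?K = "insert a (spineR r)"
  have dl: "a \<notin> set_tree l" "a \<notin> set_tree r" using Node.prems(1) by auto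
  have dlr: "set_tree l \<inter> set_tree r = {}" using Node.prems(1) by fastforce
  have dr: "?K \<inter> set_tree l = {}" using Node.prems(1) spineR_sub[of r] by fastforce
  have bl: "blkR l \<subseteq> set_tree l \<times> set_tree l" and br: "blkR r \<subseteq> set_tree r \<times> set_tree r"
    by (rule blkR_sub)+
  have sc: "\<And>u v. (u,v) \<in> blkR r \<Longrightarrow> (v \<in> spineR r \<longleftrightarrow> u \<in> spineR r)"
    using spineR_closed Node.prems(1) by auto
  consider "(x,y) \<in> blkR r" | "(x,y) \<in> blkR l" | "x \<in> ?K" "y \<in> ?K"
    using Node.prems(2) by auto
  then show ?case
  proof cases
    case 1
    consider "(y,z) \<in> blkR r" | "(y,z) \<in> blkR l" | "y \<in> ?K" "z \<in> ?K"
      using Node.prems(3) by auto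
    then show ?thesis
    proof cases
      case 1
      then show ?thesis using \<open>(x,y) \<in> blkR r\<close> Node.IH(2) Node.prems(1) by auto
    next
      case 2
      then show ?thesis using \<open>(x,y) \<in> blkR r\<close> bl br dlr by auto
    next
      case 3
      then have "y \<in> spineR r" using \<open>(x,y) \<in> blkR r\<close> br dl by auto
      then have "x \<in> spineR r" using sc \<open>(x,y) \<in> blkR r\<close> by auto
      then show ?thesis using 3 by auto
    qed
  next
    case 2
    consider "(y,z) \<in> blkR r" | "(y,z) \<in> blkR l" | "y \<in> ?K" "z \<in> ?K"
      using Node.prems(3) by auto
    then show ?thesis
    proof cases
      case 1
      then show ?thesis using \<open>(x,y) \<in> blkR l\<close> bl br dlr by auto
    next
      case 2
      then show ?thesis using \<open>(x,y) \<in> blkR l\<close> Node.IH(1) Node.prems(1) by auto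
    next
      case 3
      then show ?thesis using \<open>(x,y) \<in> blkR l\<close> bl dr by auto
    qed
  next
    case 3
    consider "(y,z) \<in> blkR r" | "(y,z) \<in> blkR l" | "y \<in> ?K" "z \<in> ?K"
      using Node.prems(3) by auto
    then show ?thesis
    proof cases
      case 1
      then have "y \<in> spineR r" using 3 br dl by auto
      then have "z \<in> spineR r" using sc blkR_sym \<open>(y,z) \<in> blkR r\<close> by blast
      then show ?thesis using 3 by auto
    next
      case 2
      then show ?thesis using 3 bl dr by auto
    next
      case 3
      then show ?thesis using \<open>x \<in> ?K\<close> by auto
    qed
  qed
qed

lemma blkR_equiv: "bst t \<Longrightarrow> equiv (set_tree t) (blkR t)"
  unfolding equiv_def refl_on_def sym_def trans_def
  using blkR_sub blkR_refl blkR_sym blkR_trans by blast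

lemma blkR_nc: "bst t \<Longrightarrow> nc (blkR t)"
proof (induction t)
  case Leaf then show ?case by (simp add: nc_def)
next
  case (Node l v r)
  let ?K = "insert v (spineR r)"
  let ?t = "\<langle>l,v,r\<rangle>"
  have bl: "blkR l \<subseteq> set_tree l \<times> set_tree l" and br: "blkR r \<subseteq> set_tree r \<times> set_tree r"
    and bt: "blkR ?t \<subseteq> set_tree ?t \<times> set_tree ?t"
    by (rule blkR_sub)+
  have sr: "spineR r \<subseteq> set_tree r" by (rule spineR_sub)
  have lt: "\<forall>x\<in>set_tree l. x < v" "\<forall>x\<in>set_tree r. v < x" using Node.prems by auto
  have L: "\<And>x. x \<in> set_tree ?t \<Longrightarrow> x < v \<Longrightarrow> x \<in> set_tree l" using lt by auto
  have R: "\<And>x. x \<in> set_tree ?t \<Longrightarrow> v < x \<Longrightarrow> x \<in> set_tree r" using lt by auto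
  have ncl: "nc (blkR l)" "nc (blkR r)" using Node by auto
  have sc: "\<And>u w. (u,w) \<in> blkR r \<Longrightarrow> (w \<in> spineR r \<longleftrightarrow> u \<in> spineR r)"
    using spineR_closed Node.prems(1) by auto
  have sp: "spineR r \<times> spineR r \<subseteq> blkR r" by (cases r) auto
  have Kge: "\<And>x. x \<in> ?K \<Longrightarrow> v \<le> x" using sr lt by fastforce
  show ?case unfolding nc_def
  proof (intro allI impI)
    fix a b c d assume o: "a < b" "b < c" "c < d" and ac: "(a,c) \<in> blkR ?t"
      and bd: "(b,d) \<in> blkR ?t"
    have inS: "a \<in> set_tree ?t" "b \<in> set_tree ?t" "c \<in> set_tree ?t" "d \<in> set_tree ?t"
      using ac bd bt by blast+
    consider "(b,d) \<in> blkR r" | "(b,d) \<in> blkR l" | "b \<in> ?K" "d \<in> ?K"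
      using bd by auto
    then show "(a,b) \<in> blkR ?t"
    proof cases
      case 1
      have "b \<in> set_tree r" using 1 br by blast
      then have "v < b" using lt by blast
      then have csr: "c \<in> set_tree r" using R[OF inS(3)] o by simp
      consider "(a,c) \<in> blkR r" | "(a,c) \<in> blkR l" | "a \<in> ?K" "c \<in> ?K"
        using ac by auto
      then show ?thesis
      proof cases
        case 1
        then have "(a,b) \<in> blkR r" using \<open>(b,d) \<in> blkR r\<close> ncl o unfolding nc_def by blast
        then show ?thesis by simp
      next
        case 2 then have "c \<in> set_tree l" using bl by blast
        then show ?thesis using csr lt by fastforce
      next
        case 3
        have "c \<noteq> v" using csr lt by blast
        then have cs: "c \<in> spineR r" using 3 by simp
        show ?thesis
        proof (cases "a = v")
          case False
          then have "a \<in> spineR r" using 3 by simp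
          then have "(a,c) \<in> blkR r" using cs sp by blast
          then have "(a,b) \<in> blkR r" using \<open>(b,d) \<in> blkR r\<close> ncl o unfolding nc_def by blast
          then show ?thesis by simp
        next
          case True
          have rnl: "r \<noteq> Leaf" using csr by auto
          define m where "m = Max (set_tree r)"
          have ms: "m \<in> spineR r" using spineR_max[OF _ rnl] Node.prems unfolding m_def by auto
          have dsr: "d \<in> set_tree r" using \<open>(b,d) \<in> blkR r\<close> br by blast
          have "d \<le> m" unfolding m_def using dsr by simp
          have cm: "(c,m) \<in> blkR r" using ms cs sp by blast
          have "d \<in> spineR r"
          proof (cases "d = m")
            case True then show ?thesis using ms by simp
          next
            case False
            then have "d < m" using \<open>d \<le> m\<close> by simp
            then have "(b,c) \<in> blkR r" using ncl cm \<open>(b,d) \<in> blkR r\<close> o unfolding nc_def by blast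
            then have "b \<in> spineR r" using sc cs by blast
            then show ?thesis using sc \<open>(b,d) \<in> blkR r\<close> by blast
          qed
          then have "b \<in> spineR r" using sc \<open>(b,d) \<in> blkR r\<close> by blast
          then have "(a,b) \<in> ?K \<times> ?K" using True by blast
          then show ?thesis by (simp only: blkR.simps) blast
        qed
      qed
    next
      case 2
      then have "d \<in> set_tree l" using bl by blast
      then have "d < v" using lt by blast
      then have "a \<in> set_tree l" "c \<in> set_tree l" using L[OF inS(1)] L[OF inS(3)] o by simp_all
      then have "a \<notin> ?K" using lt sr by fastforce
      then have "(a,c) \<in> blkR l" using ac \<open>a \<in> set_tree l\<close> br lt by fastforce
      then have "(a,b) \<in> blkR l" using 2 ncl o unfolding nc_def by blast
      then show ?thesis by simp
    next
      case 3
      have "v \<le> b" using 3 Kge by blast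
      then have csr: "c \<in> set_tree r" using o R[OF inS(3)] by simp
      have ds: "d \<in> spineR r" using 3 o \<open>v \<le> b\<close> by auto
      consider "(a,c) \<in> blkR r" | "(a,c) \<in> blkR l" | "a \<in> ?K" "c \<in> ?K"
        using ac by auto
      then show ?thesis
      proof cases
        case 1
        have "a \<in> set_tree r" using 1 br by blast
        then have "b \<noteq> v" using o lt by fastforce
        then have "b \<in> spineR r" using 3 by simp
        then have "(b,d) \<in> blkR r" using ds sp by blast
        then have "(a,b) \<in> blkR r" using 1 ncl o unfolding nc_def by blast
        then show ?thesis by simp
      next
        case 2 then have "c \<in> set_tree l" using bl by blast
        then show ?thesis using csr lt by fastforce
      next
        case 3
        then have "(a,b) \<in> ?K \<times> ?K" using \<open>b \<in> ?K\<close> by blast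
        then show ?thesis by (simp only: blkR.simps) blast
      qed
    qed
  qed
qed

lemma blkR_max_block: "bst t \<Longrightarrow> t \<noteq> Leaf \<Longrightarrow> {x. (Max (set_tree t), x) \<in> blkR t} = spineR t"
proof -
  assume b: "bst t" and n: "t \<noteq> Leaf"
  have ms: "Max (set_tree t) \<in> spineR t" using spineR_max b n by auto
  have "spineR t \<times> spineR t \<subseteq> blkR t" using n by (cases t) auto
  then show ?thesis using ms spineR_closed[OF b] by blast
qed

lemma root_min_spineR: "bst \<langle>l,a,r\<rangle> \<Longrightarrow> Min (spineR \<langle>l,a,r\<rangle>) = a"
proof -
  assume b: "bst \<langle>l,a,r\<rangle>"
  have "finite (spineR \<langle>l,a,r\<rangle>)" using spineR_sub finite_subset finite_set_tree by metis
  then show ?thesis using spineR_ge_root[OF b] by (intro Min_eqI) auto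
qed

lemma blkR_restr_l: "bst \<langle>l,a,r\<rangle> \<Longrightarrow> blkR \<langle>l,a,r\<rangle> \<inter> (set_tree l \<times> set_tree l) = blkR l"
proof -
  assume b: "bst \<langle>l,a,r\<rangle>"
  have "insert a (spineR r) \<inter> set_tree l = {}" using b spineR_sub[of r] by fastforce
  moreover have "set_tree l \<inter> set_tree r = {}" using b by fastforce
  ultimately show ?thesis using blkR_sub[of l] blkR_sub[of r] by auto
qed

lemma blkR_restr_r: "bst \<langle>l,a,r\<rangle> \<Longrightarrow> blkR \<langle>l,a,r\<rangle> \<inter> (set_tree r \<times> set_tree r) = blkR r"
proof -
  assume b: "bst \<langle>l,a,r\<rangle>"
  have "spineR r \<times> spineR r \<subseteq> blkR r" by (cases r) auto
  moreover have "a \<notin> set_tree r" using b by auto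
  moreover have "set_tree l \<inter> set_tree r = {}" using b by fastforce
  ultimately show ?thesis using blkR_sub[of l] blkR_sub[of r] by auto
qed

lemma blkR_inj: "bst t1 \<Longrightarrow> bst t2 \<Longrightarrow> set_tree t1 = set_tree t2 \<Longrightarrow> blkR t1 = blkR t2 \<Longrightarrow> t1 = t2"
proof (induction t1 arbitrary: t2)
  case Leaf then show ?case by simp
next
  case (Node l a r)
  obtain l' a' r' where t2: "t2 = \<langle>l',a',r'\<rangle>" using Node.prems(3) by (cases t2) auto
  have b2: "bst \<langle>l',a',r'\<rangle>" using Node.prems(2) t2 by simp
  have "spineR \<langle>l,a,r\<rangle> = {x. (Max (set_tree \<langle>l,a,r\<rangle>), x) \<in> blkR \<langle>l,a,r\<rangle>}"
    using blkR_max_block[OF Node.prems(1)] by blast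
  also have "\<dots> = {x. (Max (set_tree t2), x) \<in> blkR t2}" by (simp only: Node.prems(3,4))
  also have "\<dots> = spineR t2" using blkR_max_block[OF Node.prems(2)] t2 by blast
  finally have "spineR \<langle>l,a,r\<rangle> = spineR \<langle>l',a',r'\<rangle>" using t2 by blast
  then have aa: "a = a'" using root_min_spineR[OF Node.prems(1)] root_min_spineR[OF b2] by simp
  have bl: "bst l" "bst r" "bst l'" "bst r'" using Node.prems(1) b2 by auto
  have st: "set_tree \<langle>l,a,r\<rangle> = set_tree \<langle>l',a',r'\<rangle>" using Node.prems(3) t2 by (simp only:)
  have sl: "set_tree l = {x \<in> set_tree \<langle>l,a,r\<rangle>. x < a}" 
    "set_tree r = {x \<in> set_tree \<langle>l,a,r\<rangle>. a < x}" using set_l set_r Node.prems(1) by blast+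
  have sl': "set_tree l' = {x \<in> set_tree \<langle>l',a',r'\<rangle>. x < a'}"
    "set_tree r' = {x \<in> set_tree \<langle>l',a',r'\<rangle>. a' < x}" using set_l set_r b2 by blast+
  have el: "set_tree l = set_tree l'" "set_tree r = set_tree r'"
    using sl sl' aa st by metis+
  have bb: "blkR \<langle>l,a,r\<rangle> = blkR \<langle>l',a',r'\<rangle>" using Node.prems(4) t2 by (simp only:)
  have "blkR l = blkR \<langle>l,a,r\<rangle> \<inter> (set_tree l \<times> set_tree l)" using blkR_restr_l[OF Node.prems(1)] by (rule sym)
  also have "\<dots> = blkR \<langle>l',a',r'\<rangle> \<inter> (set_tree l' \<times> set_tree l')" using bb el by (simp only:)
  also have "\<dots> = blkR l'" by (rule blkR_restr_l[OF b2])
  finally have "blkR l = blkR l'" .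
  then have ll: "l = l'" using Node.IH(1)[OF bl(1) bl(3) el(1)] by simp
  have "blkR r = blkR \<langle>l,a,r\<rangle> \<inter> (set_tree r \<times> set_tree r)" using blkR_restr_r[OF Node.prems(1)] by (rule sym)
  also have "\<dots> = blkR \<langle>l',a',r'\<rangle> \<inter> (set_tree r' \<times> set_tree r')" using bb el by (simp only:)
  also have "\<dots> = blkR r'" by (rule blkR_restr_r[OF b2])
  finally have "blkR r = blkR r'" .
  then have rr: "r = r'" using Node.IH(2)[OF bl(2) bl(4) el(2)] by simp
  show ?case using aa t2 ll rr by simp
qed

lemma blkR_surj: "finite S \<Longrightarrow> R \<in> NC S \<Longrightarrow> \<exists>t. bst t \<and> set_tree t = S \<and> blkR t = R"
proof (induction "card S" arbitrary: S R rule: less_induct)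
  case less
  have eq: "equiv S R" and ncR: "nc R" using less.prems unfolding NC_def by auto
  have RS: "R \<subseteq> S \<times> S" using eq unfolding equiv_def refl_on_def by auto
  show ?case
  proof (cases "S = {}")
    case True
    then show ?thesis using RS by (intro exI[of _ Leaf]) auto
  next
    case False
    define m where "m = Max S"
    have mS: "m \<in> S" using False less.prems(1) unfolding m_def by simp
    have mle: "\<And>x. x \<in> S \<Longrightarrow> x \<le> m" using less.prems(1) unfolding m_def by simp
    define B where "B = {x. (m,x) \<in> R}"
    have BS: "B \<subseteq> S" using RS unfolding B_def by auto
    have mB: "m \<in> B" using eq mS unfolding B_def equiv_def refl_on_def by auto
    have fB: "finite B" using BS less.prems(1) finite_subset by auto
    define v where "v = Min B"
    have vB: "v \<in> B" using fB mB unfolding v_def by (intro Min_in) auto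
    have leV: "\<And>x. x \<in> B \<Longrightarrow> v \<le> x" using fB unfolding v_def by simp
    have vS: "v \<in> S" using vB BS by auto
    define S1 where "S1 = {x \<in> S. x < v}"
    define S2 where "S2 = {x \<in> S. v < x}"
    have cS1: "card S1 < card S" unfolding S1_def
      by (rule psubset_card_mono) (use less.prems(1) vS in auto)
    have cS2: "card S2 < card S" unfolding S2_def
      by (rule psubset_card_mono) (use less.prems(1) vS in auto)
    have f12: "finite S1" "finite S2" using less.prems(1) unfolding S1_def S2_def by auto
    obtain l where l: "bst l" "set_tree l = S1" "blkR l = R \<inter> (S1 \<times> S1)"
      using less.hyps[OF cS1 f12(1), of "R \<inter> (S1 \<times> S1)"] NC_restrict[OF less.prems(2)]
      unfolding S1_def by auto
    obtain r where r: "bst r" "set_tree r = S2" "blkR r = R \<inter> (S2 \<times> S2)"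
      using less.hyps[OF cS2 f12(2), of "R \<inter> (S2 \<times> S2)"] NC_restrict[OF less.prems(2)]
      unfolding S2_def by auto
    let ?t = "\<langle>l,v,r\<rangle>"
    have bt: "bst ?t" using l r unfolding S1_def S2_def by auto
    have st: "set_tree ?t = S" using l r vS unfolding S1_def S2_def by auto
    have K: "insert v (spineR r) = B"
    proof (cases "r = Leaf")
      case True
      then have "S2 = {}" using r by auto
      then have "m = v" using mS mle vB BS unfolding S2_def
        by (metis (mono_tags, lifting) empty_iff le_neq_implies_less mem_Collect_eq subsetD)
      then have "\<forall>x\<in>B. x = v" using leV mle BS by (meson antisym subsetD)
      then have "B = {v}" using vB by blast
      then show ?thesis using True by simp
    next
      case False
      obtain x where "x \<in> S2" using False r by fastforce
      then have mv: "v < m" using mle unfolding S2_def by fastforce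
      have "Max S2 = m" using f12 mle mS mv unfolding S2_def by (intro Max_eqI) auto
      then have "spineR r = {x. (m, x) \<in> R \<inter> (S2 \<times> S2)}"
        using blkR_max_block[OF r(1) False] r by simp
      also have "\<dots> = B - {v}"
      proof
        show "{x. (m, x) \<in> R \<inter> (S2 \<times> S2)} \<subseteq> B - {v}" unfolding B_def S2_def by auto
        show "B - {v} \<subseteq> {x. (m, x) \<in> R \<inter> (S2 \<times> S2)}"
        proof
          fix x assume x: "x \<in> B - {v}"
          then have "v < x" using leV le_neq_implies_less by blast
          then show "x \<in> {x. (m, x) \<in> R \<inter> (S2 \<times> S2)}" using x BS mS mv unfolding B_def S2_def by auto
        qed
      qed
      finally show ?thesis using vB by auto
    qed
    have "R = R \<inter> (S1 \<times> S1) \<union> R \<inter> (S2 \<times> S2) \<union> B \<times> B"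
    proof
      show "R \<subseteq> R \<inter> (S1 \<times> S1) \<union> R \<inter> (S2 \<times> S2) \<union> B \<times> B"
      proof
        fix p assume pR: "p \<in> R"
        obtain x y where p: "p = (x,y)" by (cases p)
        have xy: "x \<in> S" "y \<in> S" using pR p RS by auto
        show "p \<in> R \<inter> (S1 \<times> S1) \<union> R \<inter> (S2 \<times> S2) \<union> B \<times> B"
        proof (cases "x \<in> B")
          case True
          then have "y \<in> B" using pR p eq unfolding B_def equiv_def trans_def by blast
          then show ?thesis using True p by auto
        next
          case False
          have yB: "y \<notin> B" using False pR p eq unfolding B_def equiv_def trans_def sym_def by blast
          have mv: "(v,m) \<in> R" using vB eq unfolding B_def equiv_def sym_def by blast
          have xm: "x < m" "y < m" using False yB mB mle xy le_neq_implies_less by metis+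
          have "x \<noteq> v" "y \<noteq> v" using False yB vB by auto
          have xvB: "(x,v) \<in> R \<Longrightarrow> False"
          proof -
            assume "(x,v) \<in> R"
            then have "(m,x) \<in> R" using vB eq unfolding B_def equiv_def sym_def trans_def by blast
            then show False using False unfolding B_def by simp
          qed
          have yvB: "(y,v) \<in> R \<Longrightarrow> False"
          proof -
            assume "(y,v) \<in> R"
            then have "(m,y) \<in> R" using vB eq unfolding B_def equiv_def sym_def trans_def by blast
            then show False using yB unfolding B_def by simp
          qed
          have "\<not> (x < v \<and> v < y)"
          proof
            assume "x < v \<and> v < y"
            then have "(x,v) \<in> R" using ncR mv pR p xm unfolding nc_def by blast
            then show False using xvB by simp
          qed
          moreover have "\<not> (y < v \<and> v < x)"
          proof
            assume "y < v \<and> v < x"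
            moreover have "(y,x) \<in> R" using pR p eq unfolding equiv_def sym_def by blast
            ultimately have "(y,v) \<in> R" using ncR mv xm unfolding nc_def by blast
            then show False using yvB by simp
          qed
          ultimately show ?thesis using pR p xy \<open>x \<noteq> v\<close> \<open>y \<noteq> v\<close> unfolding S1_def S2_def by auto
        qed
      qed
    next
      show "R \<inter> (S1 \<times> S1) \<union> R \<inter> (S2 \<times> S2) \<union> B \<times> B \<subseteq> R"
        using mB eq unfolding B_def equiv_def trans_def sym_def by blast
    qed
    then have "blkR ?t = R" using l r K by simp
    then show ?thesis using bt st by blast
  qed
qed

lemma thmAR: "finite S \<Longrightarrow> bij_betw blkR {t. bst t \<and> set_tree t = S} (NC S)"
  unfolding bij_betw_def inj_on_def
proof (intro conjI ballI impI)
  fix t1 t2 assume "t1 \<in> {t. bst t \<and> set_tree t = S}" "t2 \<in> {t. bst t \<and> set_tree t = S}"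
    "blkR t1 = blkR t2"
  then show "t1 = t2" using blkR_inj by auto
next
  assume f: "finite S"
  show "blkR ` {t. bst t \<and> set_tree t = S} = NC S"
  proof
    show "blkR ` {t. bst t \<and> set_tree t = S} \<subseteq> NC S"
      using blkR_equiv blkR_nc unfolding NC_def by auto
    show "NC S \<subseteq> blkR ` {t. bst t \<and> set_tree t = S}"
      using blkR_surj[OF f] by blast
  qed
qed



lemma take_Suc_nth': "k < length x \<Longrightarrow> set (take (Suc k) x) = insert (x ! k) (set (take k x))"
  by (simp add: take_Suc_conv_app_nth)

lemma ins_seg: "1 \<le> c \<Longrightarrow> c \<le> Suc M \<Longrightarrow> insert c {1..M} = {1..max M (c::nat)}"
  by (auto simp: max_def)

lemma rgs_init_seg:
  assumes r: "is_rgs x" shows "k \<le> length x \<Longrightarrow> set (take k x) = {1..Max (insert 0 (set (take k x)))}"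
proof (induction k)
  case 0 then show ?case by simp
next
  case (Suc k)
  let ?M = "Max (insert 0 (set (take k x)))"
  have IH: "set (take k x) = {1..?M}" using Suc by simp
  have xk: "1 \<le> x ! k" "x ! k \<le> Suc ?M" using r Suc.prems unfolding is_rgs_def by auto
  have e: "set (take (Suc k) x) = insert (x ! k) {1..?M}" using take_Suc_nth'[of k x] Suc.prems IH by simp
  also have "\<dots> = {1..max ?M (x!k)}" using xk ins_seg by blast
  finally have e2: "set (take (Suc k) x) = {1..max ?M (x!k)}" .
  have mm: "Max (insert 0 {1..max ?M (x!k)}) = max ?M (x!k)"
    by (rule Max_eqI) auto
  show ?case by (simp only: e2 mm)
qed

lemma rgs_first_occ:
  assumes r: "is_rgs x" and p: "p < length x" and u: "1 \<le> u" "u < x ! p"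
  shows "\<exists>q<p. x ! q = u"
proof -
  define M where "M = Max (insert 0 (set (take p x)))"
  have sx: "set (take p x) = {1..M}" unfolding M_def by (rule rgs_init_seg[OF r]) (use p in simp)
  have "x ! p \<le> Suc M" using r p unfolding is_rgs_def M_def by auto
  then have "u \<in> {1..M}" using u by simp
  then have "u \<in> set (take p x)" using sx by blast
  then show ?thesis by (auto simp: in_set_conv_nth)
qed

lemma rgs_unique:
  assumes rx: "is_rgs x" and ry: "is_rgs y" and l: "length x = length y"
    and e: "\<And>p q. p < length x \<Longrightarrow> q < length x \<Longrightarrow> (x ! p = x ! q \<longleftrightarrow> y ! p = y ! q)"
  shows "x = y"
proof -
  have "\<forall>q<p. x ! q = y ! q" if "p \<le> length x" for p
    using that
  proof (induction p)
    case 0 then show ?case by simp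
  next
    case (Suc p)
    then have IH: "\<forall>q<p. x ! q = y ! q" by simp
    have pl: "p < length x" using Suc.prems by simp
    have tk: "take p x = take p y"
      using IH pl l by (intro nth_equalityI) auto
    have "x ! p = y ! p"
    proof (cases "\<exists>q<p. x ! q = x ! p")
      case True
      then obtain q where q: "q < p" "x ! q = x ! p" by blast
      then have "y ! q = y ! p" using e[of q p] pl by simp
      then show ?thesis using q IH by simp
    next
      case False
      then have nx: "x ! p \<notin> set (take p x)" using pl by (auto simp: in_set_conv_nth)
      have "\<not> (\<exists>q<p. y ! q = y ! p)" using False e pl by (meson less_trans)
      then have ny: "y ! p \<notin> set (take p y)" using pl l by (auto simp: in_set_conv_nth)
      define M where "M = Max (insert 0 (set (take p x)))"
      have sx: "set (take p x) = {1..M}" unfolding M_def by (rule rgs_init_seg[OF rx]) (use pl in simp)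
      have sy: "set (take p y) = {1..M}" unfolding M_def tk by (rule rgs_init_seg[OF ry]) (use pl l in simp)
      have "1 \<le> x ! p" "x ! p \<le> Suc M" using rx pl unfolding is_rgs_def M_def by auto
      moreover have "1 \<le> y ! p" "y ! p \<le> Suc M" using ry pl l tk unfolding is_rgs_def M_def by auto
      ultimately have "x ! p = Suc M" "y ! p = Suc M" using nx ny sx sy by auto
      then show ?thesis by simp
    qed
    then show ?case using IH less_Suc_eq by auto
  qed
  then show ?thesis using l by (intro nth_equalityI) auto
qed

lemma contains_1212_D:
  assumes "contains x [1,2,1,2]"
  shows "\<exists>p0 p1 p2 p3. p0 < p1 \<and> p1 < p2 \<and> p2 < p3 \<and> p3 < length x \<and>
           x ! p0 = x ! p2 \<and> x ! p1 = x ! p3 \<and> x ! p0 \<noteq> x ! p1"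
proof -
  have l4: "length [1,2,1,2::nat] = 4" by simp
  obtain f where f1: "\<forall>a b. a < b \<and> b < 4 \<longrightarrow> f a < f b"
    and f2: "\<forall>a < 4. f a < length x"
    and f3: "\<forall>a < 4. \<forall>b < 4. (x ! f a < x ! f b \<longleftrightarrow> [1,2,1,2::nat] ! a < [1,2,1,2::nat] ! b) \<and>
               (x ! f a = x ! f b \<longleftrightarrow> [1,2,1,2::nat] ! a = [1,2,1,2::nat] ! b)"
    using assms unfolding contains_def l4 by blast
  have "f 0 < f 1" "f 1 < f 2" "f 2 < f 3" using f1 by auto
  moreover have "f 3 < length x" using f2 by auto
  moreover have "x ! f 0 = x ! f 2" using f3[rule_format, of 0 2] by simp
  moreover have "x ! f 1 = x ! f 3" using f3[rule_format, of 1 3] by simp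
  moreover have "x ! f 0 \<noteq> x ! f 1" using f3[rule_format, of 0 1] by simp
  ultimately show ?thesis by blast
qed

lemma contains_1212_I:
  assumes "p0 < p1" "p1 < p2" "p2 < p3" "p3 < length x"
    "x ! p0 = x ! p2" "x ! p1 = x ! p3" "x ! p0 < x ! p1"
  shows "contains x [1,2,1,2]"
proof -
  define f where "f = (\<lambda>k. [p0,p1,p2,p3] ! k)"
  have c4: "\<And>a. a < length [1,2,1,2::nat] \<Longrightarrow> a = 0 \<or> a = 1 \<or> a = 2 \<or> a = 3" by auto
  have f0: "f 0 = p0" "f 1 = p1" "f 2 = p2" "f 3 = p3" unfolding f_def by simp_all
  have h1: "\<forall>a b. a < b \<and> b < length [1,2,1,2::nat] \<longrightarrow> f a < f b"
  proof (intro allI impI)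
    fix a b assume ab: "a < b \<and> b < length [1,2,1,2::nat]"
    then have "a < length [1,2,1,2::nat]" by simp
    then show "f a < f b" using c4[of a] c4[of b] ab f0 assms by auto
  qed
  have h2: "\<forall>a < length [1,2,1,2::nat]. f a < length x"
  proof (intro allI impI)
    fix a assume "a < length [1,2,1,2::nat]"
    then show "f a < length x" using c4[of a] f0 assms by auto
  qed
  have h3: "\<forall>a < length [1,2,1,2::nat]. \<forall>b < length [1,2,1,2::nat].
          (x ! f a < x ! f b \<longleftrightarrow> [1,2,1,2::nat] ! a < [1,2,1,2::nat] ! b) \<and>
          (x ! f a = x ! f b \<longleftrightarrow> [1,2,1,2::nat] ! a = [1,2,1,2::nat] ! b)"
  proof (intro allI impI)
    fix a b assume a: "a < length [1,2,1,2::nat]" and b: "b < length [1,2,1,2::nat]"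
    show "(x ! f a < x ! f b \<longleftrightarrow> [1,2,1,2::nat] ! a < [1,2,1,2::nat] ! b) \<and>
          (x ! f a = x ! f b \<longleftrightarrow> [1,2,1,2::nat] ! a = [1,2,1,2::nat] ! b)"
      using c4[OF a] c4[OF b] f0 assms(5-7) by auto
  qed
  show ?thesis unfolding contains_def using h1 h2 h3 by blast
qed



definition bl :: "nat \<Rightarrow> (nat \<times> nat) set \<Rightarrow> nat \<Rightarrow> nat set" where
  "bl n R i = {j \<in> {1..n}. (i,j) \<in> R}"
definition mu :: "nat \<Rightarrow> (nat \<times> nat) set \<Rightarrow> nat \<Rightarrow> nat" where
  "mu n R i = Min (bl n R i)"
definition mins :: "nat \<Rightarrow> (nat \<times> nat) set \<Rightarrow> nat set" where
  "mins n R = mu n R ` {1..n}"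
definition val :: "nat \<Rightarrow> (nat \<times> nat) set \<Rightarrow> nat \<Rightarrow> nat" where
  "val n R i = card {m \<in> mins n R. m \<le> mu n R i}"

definition G :: "nat \<Rightarrow> (nat \<times> nat) set \<Rightarrow> nat list" where
  "G n R = rgs_of n (\<lambda>i j. (i,j) \<in> R)"

lemma G_length: "length (G n R) = n"
  unfolding G_def rgs_of_def by simp

lemma G_nth: "p < n \<Longrightarrow> G n R ! p = val n R (Suc p)"
  unfolding G_def rgs_of_def val_def mins_def mu_def bl_def block_def
  by (simp add: image_image del: upt_Suc)

lemma set_take_img: "p \<le> length xs \<Longrightarrow> set (take p xs) = (\<lambda>q. xs ! q) ` {..<p}"
proof
  assume p: "p \<le> length xs"
  show "set (take p xs) \<subseteq> (\<lambda>q. xs ! q) ` {..<p}"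
  proof
    fix y assume "y \<in> set (take p xs)"
    then obtain i where "i < length (take p xs)" "take p xs ! i = y" by (auto simp: in_set_conv_nth)
    then show "y \<in> (\<lambda>q. xs ! q) ` {..<p}" using p by auto
  qed
  show "(\<lambda>q. xs ! q) ` {..<p} \<subseteq> set (take p xs)"
  proof
    fix y assume "y \<in> (\<lambda>q. xs ! q) ` {..<p}"
    then obtain q where q: "q < p" "y = xs ! q" by blast
    then have "y = take p xs ! q" "q < length (take p xs)" using p by auto
    then show "y \<in> set (take p xs)" using nth_mem by metis
  qed
qed

context
  fixes n :: nat and R :: "(nat \<times> nat) set"
  assumes eqR: "equiv {1..n} R"
begin

lemma RS: "R \<subseteq> {1..n} \<times> {1..n}" using eqR unfolding equiv_def by auto

lemma bl_in: "i \<in> {1..n} \<Longrightarrow> i \<in> bl n R i"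
  using eqR unfolding bl_def equiv_def refl_on_def by auto

lemma bl_fin: "finite (bl n R i)" unfolding bl_def by auto

lemma bl_eq: "(i,j) \<in> R \<Longrightarrow> bl n R i = bl n R j"
  using eqR unfolding bl_def equiv_def sym_def trans_def by blast

lemma mu_in: "i \<in> {1..n} \<Longrightarrow> mu n R i \<in> bl n R i"
  unfolding mu_def using bl_in bl_fin by (intro Min_in) auto

lemma mu_R: "i \<in> {1..n} \<Longrightarrow> (i, mu n R i) \<in> R"
  using mu_in unfolding bl_def by auto

lemma mu_range: "i \<in> {1..n} \<Longrightarrow> mu n R i \<in> {1..n}"
  using mu_in unfolding bl_def by auto

lemma mu_le: "i \<in> {1..n} \<Longrightarrow> mu n R i \<le> i"
  unfolding mu_def using bl_in bl_fin by (intro Min_le) auto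

lemma mu_eq: "(i,j) \<in> R \<Longrightarrow> mu n R i = mu n R j"
  unfolding mu_def using bl_eq by simp

lemma mu_mu: "i \<in> {1..n} \<Longrightarrow> mu n R (mu n R i) = mu n R i"
  using mu_eq[OF mu_R] by simp

lemma mins_fin: "finite (mins n R)" unfolding mins_def by simp

lemma mins_mu: "m \<in> mins n R \<Longrightarrow> mu n R m = m \<and> m \<in> {1..n}"
  unfolding mins_def using mu_mu mu_range by auto

lemma val_eq_iff: "i \<in> {1..n} \<Longrightarrow> j \<in> {1..n} \<Longrightarrow> val n R i = val n R j \<longleftrightarrow> (i,j) \<in> R"
proof
  assume i: "i \<in> {1..n}" and j: "j \<in> {1..n}" and v: "val n R i = val n R j"
  have mono: "val n R a < val n R b" if a: "a \<in> {1..n}" and b: "b \<in> {1..n}" and lt: "mu n R a < mu n R b" for a b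
  proof -
    have "{m \<in> mins n R. m \<le> mu n R a} \<subset> {m \<in> mins n R. m \<le> mu n R b}"
    proof
      show "{m \<in> mins n R. m \<le> mu n R a} \<subseteq> {m \<in> mins n R. m \<le> mu n R b}" using lt by auto
      have "mu n R b \<in> mins n R" using b unfolding mins_def by auto
      moreover have "mu n R b \<notin> {m \<in> mins n R. m \<le> mu n R a}" using lt by simp
      ultimately show "{m \<in> mins n R. m \<le> mu n R a} \<noteq> {m \<in> mins n R. m \<le> mu n R b}" by blast
    qed
    then show ?thesis unfolding val_def using mins_fin by (intro psubset_card_mono) auto
  qed
  have "mu n R i = mu n R j"
    using mono[OF i j] mono[OF j i] v by (metis less_irrefl linorder_neqE_nat)
  then have "(j, mu n R i) \<in> R" using mu_R[OF j] by simp
  then show "(i,j) \<in> R" using mu_R[OF i] eqR unfolding equiv_def sym_def trans_def by blast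
next
  assume "(i,j) \<in> R"
  then show "val n R i = val n R j" unfolding val_def using mu_eq by simp
qed

lemma val_ge1: "i \<in> {1..n} \<Longrightarrow> 1 \<le> val n R i"
proof -
  assume i: "i \<in> {1..n}"
  have "mu n R i \<in> {m \<in> mins n R. m \<le> mu n R i}" using i unfolding mins_def by auto
  then have "{m \<in> mins n R. m \<le> mu n R i} \<noteq> {}" by blast
  then show ?thesis unfolding val_def using mins_fin
    by (simp add: Suc_le_eq card_gt_0_iff)
qed

lemma val_bound: "i \<in> {1..n} \<Longrightarrow> val n R i \<le> Suc (Max (insert 0 (val n R ` {1..<i})))"
proof -
  assume i: "i \<in> {1..n}"
  let ?L = "{m \<in> mins n R. m < i}"
  have fL: "finite ?L" using mins_fin by simp
  have "{m \<in> mins n R. m \<le> mu n R i} \<subseteq> insert (mu n R i) ?L"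
    using mu_le[OF i] by auto
  then have "val n R i \<le> card (insert (mu n R i) ?L)"
    unfolding val_def using fL by (intro card_mono) auto
  also have "\<dots> \<le> Suc (card ?L)" using fL by (simp add: card_insert_if)
  finally have v1: "val n R i \<le> Suc (card ?L)" .
  have "card ?L \<le> Max (insert 0 (val n R ` {1..<i}))"
  proof (cases "?L = {}")
    case True then show ?thesis by simp
  next
    case False
    define m' where "m' = Max ?L"
    have m'L: "m' \<in> ?L" using False fL unfolding m'_def by (intro Max_in) auto
    have m'mu: "mu n R m' = m'" "m' \<in> {1..n}" using mins_mu m'L by auto
    have "?L \<subseteq> {m \<in> mins n R. m \<le> mu n R m'}"
      using m'mu fL unfolding m'_def by auto
    then have "card ?L \<le> val n R m'" unfolding val_def using mins_fin by (intro card_mono) auto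
    also have "\<dots> \<le> Max (insert 0 (val n R ` {1..<i}))"
      using m'L m'mu by (intro Max_ge) auto
    finally show ?thesis .
  qed
  then show ?thesis using v1 by simp
qed

lemma G_rgs: "is_rgs (G n R)"
  unfolding is_rgs_def
proof (intro allI impI conjI)
  fix p assume p: "p < length (G n R)"
  then have pn: "p < n" using G_length by simp
  have i: "Suc p \<in> {1..n}" using pn by simp
  show "1 \<le> G n R ! p" using G_nth[OF pn] val_ge1[OF i] by simp
  have "set (take p (G n R)) = val n R ` {1..<Suc p}"
  proof -
    have "set (take p (G n R)) = (\<lambda>q. G n R ! q) ` {..<p}"
      by (rule set_take_img) (use pn G_length in simp)
    also have "\<dots> = (\<lambda>q. val n R (Suc q)) ` {..<p}" using G_nth pn by (intro image_cong) auto
    also have "\<dots> = val n R ` {1..<Suc p}"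
    proof -
      have e: "Suc ` {..<p} = {1..<Suc p}" by (simp add: lessThan_atLeast0)
      show ?thesis unfolding e[symmetric] by (simp only: image_image)
    qed
    finally show ?thesis .
  qed
  then show "G n R ! p \<le> Suc (Max (insert 0 (set (take p (G n R)))))"
    using G_nth[OF pn] val_bound[OF i] by simp
qed

lemma G_rel: "p < n \<Longrightarrow> q < n \<Longrightarrow> G n R ! p = G n R ! q \<longleftrightarrow> (Suc p, Suc q) \<in> R"
  using G_nth val_eq_iff by simp

end



lemma NC_equiv: "R \<in> NC S \<Longrightarrow> equiv S R" unfolding NC_def by simp
lemma NC_nc: "R \<in> NC S \<Longrightarrow> nc R" unfolding NC_def by simp

lemma G_in: "R \<in> NC {1..n} \<Longrightarrow> G n R \<in> RGS_avoid n [1,2,1,2]"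
proof -
  assume RN: "R \<in> NC {1..n}"
  note eq = NC_equiv[OF RN] and ncR = NC_nc[OF RN]
  have "\<not> contains (G n R) [1,2,1,2]"
  proof
    assume "contains (G n R) [1,2,1,2]"
    then obtain p0 p1 p2 p3 where p: "p0 < p1" "p1 < p2" "p2 < p3" "p3 < length (G n R)"
      "G n R ! p0 = G n R ! p2" "G n R ! p1 = G n R ! p3" "G n R ! p0 \<noteq> G n R ! p1"
      using contains_1212_D by blast
    have pn: "p0 < n" "p1 < n" "p2 < n" "p3 < n" using p G_length[of n R] by auto
    have "(Suc p0, Suc p2) \<in> R" "(Suc p1, Suc p3) \<in> R"
      using G_rel[OF eq] pn p by auto
    moreover have "Suc p0 < Suc p1" "Suc p1 < Suc p2" "Suc p2 < Suc p3" using p by auto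
    ultimately have "(Suc p0, Suc p1) \<in> R" using ncR unfolding nc_def by blast
    then show False using G_rel[OF eq] pn p by auto
  qed
  then show ?thesis unfolding RGS_avoid_def RGS_def using G_length G_rgs[OF eq] by auto
qed

lemma G_inj: "R \<in> NC {1..n} \<Longrightarrow> R' \<in> NC {1..n} \<Longrightarrow> G n R = G n R' \<Longrightarrow> R = R'"
proof -
  assume RN: "R \<in> NC {1..n}" and RN': "R' \<in> NC {1..n}" and g: "G n R = G n R'"
  note eq = NC_equiv[OF RN] and eq' = NC_equiv[OF RN']
  have "(i,j) \<in> R \<longleftrightarrow> (i,j) \<in> R'" for i j
  proof (cases "i \<in> {1..n} \<and> j \<in> {1..n}")
    case True
    then have pq: "i - 1 < n" "j - 1 < n" "Suc (i - 1) = i" "Suc (j - 1) = j" by auto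
    show ?thesis using G_rel[OF eq pq(1,2)] G_rel[OF eq' pq(1,2)] g pq(3,4) by simp
  next
    case False
    then show ?thesis using RS[OF eq] RS[OF eq'] by auto
  qed
  then show "R = R'" by auto
qed

lemma G_surj: "x \<in> RGS_avoid n [1,2,1,2] \<Longrightarrow> \<exists>R\<in>NC {1..n}. G n R = x"
proof -
  assume xa: "x \<in> RGS_avoid n [1,2,1,2]"
  have lx: "length x = n" and rx: "is_rgs x" and nx: "\<not> contains x [1,2,1,2]"
    using xa unfolding RGS_avoid_def RGS_def by auto
  define R where "R = {(i,j). i \<in> {1..n} \<and> j \<in> {1..n} \<and> x ! (i - 1) = x ! (j - 1)}"
  have eq: "equiv {1..n} R"
    unfolding equiv_def refl_on_def sym_def trans_def R_def by auto
  have ncR: "nc R" unfolding nc_def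
  proof (intro allI impI)
    fix a b c d assume o: "a < b" "b < c" "c < d" and ac: "(a,c) \<in> R" and bd: "(b,d) \<in> R"
    have rng: "a \<in> {1..n}" "b \<in> {1..n}" "c \<in> {1..n}" "d \<in> {1..n}" using ac bd unfolding R_def by auto
    have e1: "x ! (a - 1) = x ! (c - 1)" "x ! (b - 1) = x ! (d - 1)" using ac bd unfolding R_def by auto
    have o': "a - 1 < b - 1" "b - 1 < c - 1" "c - 1 < d - 1" "d - 1 < length x" using o rng lx by auto
    show "(a,b) \<in> R"
    proof (rule ccontr)
      assume "(a,b) \<notin> R"
      then have ne: "x ! (a - 1) \<noteq> x ! (b - 1)" using rng unfolding R_def by auto
      show False
      proof (cases "x ! (a - 1) < x ! (b - 1)")
        case True
        then have "contains x [1,2,1,2]" using contains_1212_I[OF o' e1] by simp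
        then show False using nx by simp
      next
        case False
        then have lt: "x ! (b - 1) < x ! (a - 1)" using ne by simp
        have "1 \<le> x ! (b - 1)" using rx o'(2,3,4) unfolding is_rgs_def by auto
        then obtain q where q: "q < a - 1" "x ! q = x ! (b - 1)"
          using rgs_first_occ[OF rx _ _ lt] o' by auto
        have "contains x [1,2,1,2]"
          by (rule contains_1212_I[of q "a - 1" "b - 1" "c - 1"]) (use q o' e1 lt in auto)
        then show False using nx by simp
      qed
    qed
  qed
  have RN: "R \<in> NC {1..n}" unfolding NC_def using eq ncR by simp
  have "G n R = x"
  proof (rule rgs_unique[OF G_rgs[OF eq] rx])
    show "length (G n R) = length x" using G_length lx by simp
    fix p q assume "p < length (G n R)" "q < length (G n R)"
    then have pq: "p < n" "q < n" using G_length by auto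
    show "G n R ! p = G n R ! q \<longleftrightarrow> x ! p = x ! q"
      using G_rel[OF eq pq] pq unfolding R_def by auto
  qed
  then show ?thesis using RN by blast
qed

lemma thmB: "bij_betw (G n) (NC {1..n}) (RGS_avoid n [1,2,1,2])"
  unfolding bij_betw_def inj_on_def
  using G_in G_inj G_surj by blast



lemma rtr_sym: "(x,y) \<in> (E \<union> E\<inverse>)\<^sup>* \<Longrightarrow> (y,x) \<in> (E \<union> E\<inverse>)\<^sup>*"
  by (metis converse_Un converse_converse rtrancl_converseI sup_commute)

lemma rgs_of_cong: "(\<And>i j. i \<in> {1..n} \<Longrightarrow> j \<in> {1..n} \<Longrightarrow> P i j = Q i j) \<Longrightarrow> rgs_of n P = rgs_of n Q"
proof -
  assume h: "\<And>i j. i \<in> {1..n} \<Longrightarrow> j \<in> {1..n} \<Longrightarrow> P i j = Q i j"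
  have b: "block n P i = block n Q i" if "i \<in> {1..n}" for i
    unfolding block_def using h that by auto
  have "block n P ` {1..n} = block n Q ` {1..n}" using b by (rule image_cong[OF refl])
  then show ?thesis unfolding rgs_of_def using b by (intro map_cong refl) auto
qed

lemma left_edges_blk: "left_edges t \<subseteq> blk t"
proof (induction t)
  case Leaf then show ?case by simp
next
  case (Node l a r)
  have "left_edges l \<subseteq> blk \<langle>l,a,r\<rangle>" using Node.IH by auto
  moreover have "left_edges r \<subseteq> blk \<langle>l,a,r\<rangle>" using Node.IH by auto
  moreover have "(case l of Leaf \<Rightarrow> {} | Node _ b _ \<Rightarrow> {(a, b)}) \<subseteq> blk \<langle>l,a,r\<rangle>"
  proof (cases l)
    case Leaf then show ?thesis by simp
  next
    case (Node x b y) then show ?thesis by simp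
  qed
  ultimately show ?case by (simp only: left_edges.simps) blast
qed

lemma spine_reach: "x \<in> spine \<langle>l,a,r\<rangle> \<Longrightarrow> (a,x) \<in> (left_edges \<langle>l,a,r\<rangle>)\<^sup>*"
proof (induction l arbitrary: a r)
  case Leaf then show ?case by simp
next
  case (Node ll b lr)
  show ?case
  proof (cases "x = a")
    case True then show ?thesis by simp
  next
    case False
    then have "x \<in> spine \<langle>ll,b,lr\<rangle>" using Node.prems by simp
    then have "(b,x) \<in> (left_edges \<langle>ll,b,lr\<rangle>)\<^sup>*" using Node.IH(1) by blast
    moreover have "left_edges \<langle>ll,b,lr\<rangle> \<subseteq> left_edges \<langle>\<langle>ll,b,lr\<rangle>,a,r\<rangle>" by auto
    ultimately have "(b,x) \<in> (left_edges \<langle>\<langle>ll,b,lr\<rangle>,a,r\<rangle>)\<^sup>*" using rtrancl_mono by blast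
    moreover have "(a,b) \<in> left_edges \<langle>\<langle>ll,b,lr\<rangle>,a,r\<rangle>" by simp
    ultimately show ?thesis by (meson converse_rtrancl_into_rtrancl)
  qed
qed

lemma blk_rtr: "blk t \<subseteq> (left_edges t \<union> (left_edges t)\<inverse>)\<^sup>*"
proof (induction t)
  case Leaf then show ?case by simp
next
  case (Node l a r)
  let ?E = "left_edges \<langle>l,a,r\<rangle>"
  have sub: "left_edges l \<union> (left_edges l)\<inverse> \<subseteq> ?E \<union> ?E\<inverse>"
    "left_edges r \<union> (left_edges r)\<inverse> \<subseteq> ?E \<union> ?E\<inverse>" by auto
  have "blk l \<subseteq> (?E \<union> ?E\<inverse>)\<^sup>*" using Node.IH(1) rtrancl_mono[OF sub(1)] by blast
  moreover have "blk r \<subseteq> (?E \<union> ?E\<inverse>)\<^sup>*" using Node.IH(2) rtrancl_mono[OF sub(2)] by blast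
  moreover have "insert a (spine l) \<times> insert a (spine l) \<subseteq> (?E \<union> ?E\<inverse>)\<^sup>*"
  proof
    fix p assume "p \<in> insert a (spine l) \<times> insert a (spine l)"
    then obtain x y where p: "p = (x,y)" "x \<in> spine \<langle>l,a,r\<rangle>" "y \<in> spine \<langle>l,a,r\<rangle>" by auto
    have "(a,x) \<in> (?E \<union> ?E\<inverse>)\<^sup>*" "(a,y) \<in> (?E \<union> ?E\<inverse>)\<^sup>*"
      using spine_reach[OF p(2)] spine_reach[OF p(3)] rtrancl_mono[of ?E "?E \<union> ?E\<inverse>"] by blast+
    then show "p \<in> (?E \<union> ?E\<inverse>)\<^sup>*" using p(1) rtr_sym rtrancl_trans by metis
  qed
  ultimately show ?case by simp
qed

lemma rtr_blk: "bst t \<Longrightarrow> (x,y) \<in> (left_edges t \<union> (left_edges t)\<inverse>)\<^sup>* \<Longrightarrow> x = y \<or> (x,y) \<in> blk t"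
proof -
  assume b: "bst t" and xy: "(x,y) \<in> (left_edges t \<union> (left_edges t)\<inverse>)\<^sup>*"
  have E: "left_edges t \<union> (left_edges t)\<inverse> \<subseteq> blk t" using left_edges_blk blk_sym by blast
  from xy show ?thesis
  proof (induction rule: rtrancl_induct)
    case base then show ?case by simp
  next
    case (step y z)
    then have "(y,z) \<in> blk t" using E by blast
    then show ?case using step.IH blk_trans[OF b] by blast
  qed
qed

lemma same_branch_blk: "bst t \<Longrightarrow> i \<in> set_tree t \<Longrightarrow> j \<in> set_tree t \<Longrightarrow>
    same_branch (left_edges t) i j \<longleftrightarrow> (i,j) \<in> blk t"
  unfolding same_branch_def using rtr_blk blk_rtr blk_refl by blast

lemma phiL_eq: "t \<in> trees n \<Longrightarrow> phiL n t = G n (blk t)"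
  unfolding phiL_def G_def trees_def
  by (rule rgs_of_cong) (use same_branch_blk in auto)

lemma right_edges_blkR: "right_edges t \<subseteq> blkR t"
proof (induction t)
  case Leaf then show ?case by simp
next
  case (Node l a r)
  have "right_edges l \<subseteq> blkR \<langle>l,a,r\<rangle>" using Node.IH by auto
  moreover have "right_edges r \<subseteq> blkR \<langle>l,a,r\<rangle>" using Node.IH by auto
  moreover have "(case r of Leaf \<Rightarrow> {} | Node _ b _ \<Rightarrow> {(a, b)}) \<subseteq> blkR \<langle>l,a,r\<rangle>"
  proof (cases r)
    case Leaf then show ?thesis by simp
  next
    case (Node x b y) then show ?thesis by simp
  qed
  ultimately show ?case by (simp only: right_edges.simps) blast
qed

lemma spineR_reach: "x \<in> spineR \<langle>l,a,r\<rangle> \<Longrightarrow> (a,x) \<in> (right_edges \<langle>l,a,r\<rangle>)\<^sup>*"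
proof (induction r arbitrary: a l)
  case Leaf then show ?case by simp
next
  case (Node rl b rr)
  show ?case
  proof (cases "x = a")
    case True then show ?thesis by simp
  next
    case False
    then have "x \<in> spineR \<langle>rl,b,rr\<rangle>" using Node.prems by simp
    then have "(b,x) \<in> (right_edges \<langle>rl,b,rr\<rangle>)\<^sup>*" using Node.IH(2) by blast
    moreover have "right_edges \<langle>rl,b,rr\<rangle> \<subseteq> right_edges \<langle>l,a,\<langle>rl,b,rr\<rangle>\<rangle>" by auto
    ultimately have "(b,x) \<in> (right_edges \<langle>l,a,\<langle>rl,b,rr\<rangle>\<rangle>)\<^sup>*" using rtrancl_mono by blast
    moreover have "(a,b) \<in> right_edges \<langle>l,a,\<langle>rl,b,rr\<rangle>\<rangle>" by simp
    ultimately show ?thesis by (meson converse_rtrancl_into_rtrancl)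
  qed
qed

lemma blkR_rtr: "blkR t \<subseteq> (right_edges t \<union> (right_edges t)\<inverse>)\<^sup>*"
proof (induction t)
  case Leaf then show ?case by simp
next
  case (Node l a r)
  let ?E = "right_edges \<langle>l,a,r\<rangle>"
  have sub: "right_edges l \<union> (right_edges l)\<inverse> \<subseteq> ?E \<union> ?E\<inverse>"
    "right_edges r \<union> (right_edges r)\<inverse> \<subseteq> ?E \<union> ?E\<inverse>" by auto
  have "blkR l \<subseteq> (?E \<union> ?E\<inverse>)\<^sup>*" using Node.IH(1) rtrancl_mono[OF sub(1)] by blast
  moreover have "blkR r \<subseteq> (?E \<union> ?E\<inverse>)\<^sup>*" using Node.IH(2) rtrancl_mono[OF sub(2)] by blast
  moreover have "insert a (spineR r) \<times> insert a (spineR r) \<subseteq> (?E \<union> ?E\<inverse>)\<^sup>*"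
  proof
    fix p assume "p \<in> insert a (spineR r) \<times> insert a (spineR r)"
    then obtain x y where p: "p = (x,y)" "x \<in> spineR \<langle>l,a,r\<rangle>" "y \<in> spineR \<langle>l,a,r\<rangle>" by auto
    have "(a,x) \<in> (?E \<union> ?E\<inverse>)\<^sup>*" "(a,y) \<in> (?E \<union> ?E\<inverse>)\<^sup>*"
      using spineR_reach[OF p(2)] spineR_reach[OF p(3)] rtrancl_mono[of ?E "?E \<union> ?E\<inverse>"] by blast+
    then show "p \<in> (?E \<union> ?E\<inverse>)\<^sup>*" using p(1) rtr_sym rtrancl_trans by metis
  qed
  ultimately show ?case by simp
qed

lemma rtr_blkR: "bst t \<Longrightarrow> (x,y) \<in> (right_edges t \<union> (right_edges t)\<inverse>)\<^sup>* \<Longrightarrow> x = y \<or> (x,y) \<in> blkR t"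
proof -
  assume b: "bst t" and xy: "(x,y) \<in> (right_edges t \<union> (right_edges t)\<inverse>)\<^sup>*"
  have E: "right_edges t \<union> (right_edges t)\<inverse> \<subseteq> blkR t" using right_edges_blkR blkR_sym by blast
  from xy show ?thesis
  proof (induction rule: rtrancl_induct)
    case base then show ?case by simp
  next
    case (step y z)
    then have "(y,z) \<in> blkR t" using E by blast
    then show ?case using step.IH blkR_trans[OF b] by blast
  qed
qed

lemma same_branch_blkR: "bst t \<Longrightarrow> i \<in> set_tree t \<Longrightarrow> j \<in> set_tree t \<Longrightarrow>
    same_branch (right_edges t) i j \<longleftrightarrow> (i,j) \<in> blkR t"
  unfolding same_branch_def using rtr_blkR blkR_rtr blkR_refl by blast

lemma phiR_eq: "t \<in> trees n \<Longrightarrow> phiR n t = G n (blkR t)"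
  unfolding phiR_def G_def trees_def
  by (rule rgs_of_cong) (use same_branch_blkR in auto)

theorem lemma14:
  fixes n :: nat
  shows "bij_betw (phiL n) (trees n) (RGS_avoid n [1,2,1,2]) \<and>
         bij_betw (phiR n) (trees n) (RGS_avoid n [1,2,1,2])"
proof
  have tr: "trees n = {t. bst t \<and> set_tree t = {1..n}}" unfolding trees_def by simp
  have "bij_betw (G n \<circ> blk) (trees n) (RGS_avoid n [1,2,1,2])"
    unfolding tr by (rule bij_betw_trans[OF thmA thmB]) simp
  then show "bij_betw (phiL n) (trees n) (RGS_avoid n [1,2,1,2])"
    by (rule bij_betw_cong[THEN iffD1, rotated]) (simp add: phiL_eq)
  have "bij_betw (G n \<circ> blkR) (trees n) (RGS_avoid n [1,2,1,2])"
    unfolding tr by (rule bij_betw_trans[OF thmAR thmB]) simp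
  then show "bij_betw (phiR n) (trees n) (RGS_avoid n [1,2,1,2])"
    by (rule bij_betw_cong[THEN iffD1, rotated]) (simp add: phiR_eq)
qed

end
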